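(* Let $\alpha>0$, $t_0>0$, $x_0,v_0\in\mathcal H$, and let $x$ be a solution of the Cauchy problem $$\tfrac{\alpha}{t}\dot x(t)+\operatorname{proj}_{C(x(t))+\ddot x(t)}(0)=0\ (t>t_0),\qquad x(t_0)=x_0,\ \dot x(t_0)=v_0 .$$ Then there exists a measurable function $\theta:[t_0,+\infty)\to\Delta^m$ with $$\operatorname{proj}_{C(x(t))+\ddot x(t)}(0)=\sum_{i=1}^m\theta_i(t)\nabla f_i(x(t))+\ddot x(t)\quad\text{for all }t\in[t_0,+\infty).$$
   Context: $\mathcal H$ is a real Hilbert space. $f_1,\dots,f_m:\mathcal H\to\mathbb R$ are convex and continuously differentiable. $C(x)=\operatorname{co}\{\nabla f_i(x):i=1,\dots,m\}$. For a closed convex $K$, $\operatorname{proj}_K(y)=\arg\min_{w\in K}\|w-y\|^2$. $\Delta^m=\{\theta\in\mathbb R^m:\theta\ge0,\ \sum_i\theta_i=1\}$. A solution of the Cauchy problem is a function $x:[t_0,+\infty)\to\mathcal H$ such that: $x\in C^1([t_0,+\infty))$; $\dot x$ is absolutely continuous on $[t_0,T]$ for every $T\ge t_0$; there is a Bochner measurable $\ddot x$ with $\dot x(t)=\dot x(t_0)+\int_{t_0}^t\ddot x(s)\,ds$ for all $t$, and $\frac{d}{dt}\dot x=\ddot x$ a.e.; the equation holds for almost all $t\ge t_0$; and the initial conditions hold. Here $\ddot x$ denotes this measurable function. *)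

theory Defs
  imports "HOL-Analysis.Analysis"
begin

text \<open>Metric projection onto a (closed convex) set K: the minimiser of norm (w - y)^2 over w in K.\<close>
definition proj :: "'a::real_inner set \<Rightarrow> 'a \<Rightarrow> 'a" where
  "proj K y = (SOME w. w \<in> K \<and> (\<forall>z\<in>K. (norm (w - y))\<^sup>2 \<le> (norm (z - y))\<^sup>2))"

text \<open>C(x) = co { grad f_i x : i = 1..m }, where g i is the gradient of f i.\<close>
definition Cset :: "nat \<Rightarrow> (nat \<Rightarrow> 'a::real_inner \<Rightarrow> 'a) \<Rightarrow> 'a \<Rightarrow> 'a set" where
  "Cset m g x = convex hull {g i x | i. i \<in> {1..m}}"

text \<open>The standard prob_simplex Delta^m, indices 1..m.\<close>
definition prob_simplex :: "nat \<Rightarrow> (nat \<Rightarrow> real) set" where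
  "prob_simplex m = {\<theta>. (\<forall>i\<in>{1..m}. 0 \<le> \<theta> i) \<and> (\<Sum>i=1..m. \<theta> i) = 1}"

end

theory Submission
  imports Defs
begin

lemma rat_near:
  fixes s b d :: real
  assumes "0 \<le> s" "s \<le> b" "d > 0"
  shows "\<exists>q\<in>\<rat>. 0 \<le> q \<and> q \<le> b \<and> \<bar>q - s\<bar> < d"
proof (cases "b = 0")
  case True
  then show ?thesis using assms by (intro bexI[of _ 0]) auto
next
  case False
  then have "max 0 (s - d) < min b (s + d)" using assms by auto
  then obtain q where "q \<in> \<rat>" "max 0 (s - d) < q" "q < min b (s + d)"
    using Rats_dense_in_real by blast
  then show ?thesis by (intro bexI[of _ q]) auto
qed

definition Kb :: "real \<Rightarrow> 'a::real_vector \<Rightarrow> 'a set \<Rightarrow> 'a set" where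
  "Kb b a H = {s *\<^sub>R a + (1 - s) *\<^sub>R u |s u. s \<in> {0..b} \<and> u \<in> H}"

lemma Kb_compact:
  fixes H :: "'a::real_normed_vector set"
  assumes "compact H"
  shows "compact (Kb b a H)"
proof -
  have "Kb b a H = (\<lambda>p. fst p *\<^sub>R a + (1 - fst p) *\<^sub>R snd p) ` ({0..b} \<times> H)"
    unfolding Kb_def by force
  moreover have "continuous_on ({0..b} \<times> H) (\<lambda>p. fst p *\<^sub>R a + (1 - fst p) *\<^sub>R snd p)"
    by (intro continuous_intros)
  ultimately show ?thesis
    using compact_continuous_image[OF _ compact_Times[OF compact_Icc assms]] by simp
qed

lemma hull_insert_Kb:
  fixes V :: "'a::real_vector set"
  assumes "V \<noteq> {}"
  shows "convex hull (insert a V) = Kb 1 a (convex hull V)"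
  unfolding convex_hull_insert[OF assms] Kb_def
  apply safe
  subgoal for x u v b by (rule exI[of _ u], rule exI[of _ b]) auto
  subgoal for x s u by (rule exI[of _ s]) (auto intro!: exI[of _ "1 - s"])
  done

lemma inf_Kb:
  fixes H :: "'a::real_normed_vector set"
  assumes H: "H \<noteq> {}" and b: "0 \<le> b"
  shows "Inf ((\<lambda>w. norm (z - r *\<^sub>R w)) ` Kb b a H) =
    (INF q\<in>{0..b}\<inter>\<rat>. Inf ((\<lambda>u. norm ((z - (r*q) *\<^sub>R a) - (r*(1-q)) *\<^sub>R u)) ` H))"
  (is "Inf ?S = (INF q\<in>?Q. ?G q)")
proof -
  have bddS: "bdd_below ?S" by (intro bdd_belowI[of _ 0]) auto
  have bddG: "bdd_below ((\<lambda>u. norm ((z - (r*q) *\<^sub>R a) - (r*(1-q)) *\<^sub>R u)) ` H)" for q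
    by (intro bdd_belowI[of _ 0]) auto
  have G0: "?G q \<ge> 0" for q using H by (intro cInf_greatest) auto
  have bddQ: "bdd_below (?G ` ?Q)" by (intro bdd_belowI[of _ 0]) (use G0 in auto)
  have Qne: "?Q \<noteq> {}" using b by (auto intro!: exI[of _ 0])
  have Sne: "?S \<noteq> {}" using H b unfolding Kb_def by auto
  show ?thesis
  proof (rule antisym)
    show "Inf ?S \<le> (INF q\<in>?Q. ?G q)"
    proof (rule cINF_greatest[OF Qne])
      fix q assume q: "q \<in> ?Q"
      show "Inf ?S \<le> ?G q"
      proof (rule cInf_greatest)
        show "(\<lambda>u. norm ((z - (r*q) *\<^sub>R a) - (r*(1-q)) *\<^sub>R u)) ` H \<noteq> {}" using H by auto
      next
        fix y assume "y \<in> (\<lambda>u. norm ((z - (r*q) *\<^sub>R a) - (r*(1-q)) *\<^sub>R u)) ` H"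
        then obtain u where u: "u \<in> H" "y = norm ((z - (r*q) *\<^sub>R a) - (r*(1-q)) *\<^sub>R u)" by auto
        have "q *\<^sub>R a + (1 - q) *\<^sub>R u \<in> Kb b a H" unfolding Kb_def using q u by auto
        moreover have "y = norm (z - r *\<^sub>R (q *\<^sub>R a + (1 - q) *\<^sub>R u))"
          using u by (simp add: algebra_simps)
        ultimately show "Inf ?S \<le> y" using bddS by (auto intro!: cInf_lower)
      qed
    qed
  next
    show "(INF q\<in>?Q. ?G q) \<le> Inf ?S"
    proof (rule cInf_greatest[OF Sne])
      fix y assume "y \<in> ?S"
      then obtain s u where su: "s \<in> {0..b}" "u \<in> H" "y = norm (z - r *\<^sub>R (s *\<^sub>R a + (1 - s) *\<^sub>R u))"
        unfolding Kb_def by auto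
      show "(INF q\<in>?Q. ?G q) \<le> y"
      proof (rule field_le_epsilon)
        fix e :: real assume e: "e > 0"
        define d where "d = e / (\<bar>r\<bar> * norm (a - u) + 1)"
        have d: "d > 0" using e unfolding d_def by (simp add: add_nonneg_pos)
        obtain q where q: "q \<in> \<rat>" "0 \<le> q" "q \<le> b" "\<bar>q - s\<bar> < d"
          using rat_near[of s b d] su d by auto
        have eq: "(z - (r*q) *\<^sub>R a) - (r*(1-q)) *\<^sub>R u = (z - r *\<^sub>R (s *\<^sub>R a + (1 - s) *\<^sub>R u)) + (r * (s - q)) *\<^sub>R (a - u)"
          by (simp add: algebra_simps)
        have n1: "norm ((z - (r*q) *\<^sub>R a) - (r*(1-q)) *\<^sub>R u) \<le> y + \<bar>r\<bar> * \<bar>s - q\<bar> * norm (a - u)"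
          unfolding eq su(3) by (rule order_trans[OF norm_triangle_ineq]) (simp add: abs_mult)
        have n2: "\<bar>r\<bar> * \<bar>s - q\<bar> * norm (a - u) \<le> d * (\<bar>r\<bar> * norm (a - u) + 1)"
        proof -
          have "\<bar>r\<bar> * \<bar>s - q\<bar> * norm (a - u) = \<bar>s - q\<bar> * (\<bar>r\<bar> * norm (a - u))" by simp
          also have "\<dots> \<le> d * (\<bar>r\<bar> * norm (a - u) + 1)"
            using q(4) by (intro mult_mono) auto
          finally show ?thesis .
        qed
        have n3: "d * (\<bar>r\<bar> * norm (a - u) + 1) = e"
        proof -
          have "\<bar>r\<bar> * norm (a - u) + 1 > 0" by (simp add: add_nonneg_pos)
          then show ?thesis unfolding d_def by simp
        qed
        have le: "norm ((z - (r*q) *\<^sub>R a) - (r*(1-q)) *\<^sub>R u) \<le> y + e" using n1 n2 n3 by linarith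
        have "(INF q\<in>?Q. ?G q) \<le> ?G q" using q bddQ by (intro cINF_lower) auto
        also have "?G q \<le> norm ((z - (r*q) *\<^sub>R a) - (r*(1-q)) *\<^sub>R u)"
          using su(2) bddG by (intro cInf_lower) auto
        finally show "(INF q\<in>?Q. ?G q) \<le> y + e" using le by simp
      qed
    qed
  qed
qed

lemma feas_inf:
  fixes H :: "'a::real_normed_vector set"
  assumes H: "compact H" "H \<noteq> {}" and y: "y \<in> Kb 1 a H"
  shows "Inf {s\<in>{0..1}. \<exists>u\<in>H. y = s *\<^sub>R a + (1-s) *\<^sub>R u} \<in> {s\<in>{0..1}. \<exists>u\<in>H. y = s *\<^sub>R a + (1-s) *\<^sub>R u}"
    and "0 \<le> b \<Longrightarrow> b \<le> 1 \<Longrightarrow> Inf {s\<in>{0..1}. \<exists>u\<in>H. y = s *\<^sub>R a + (1-s) *\<^sub>R u} \<le> b \<longleftrightarrow> y \<in> Kb b a H"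
proof -
  define F where "F = {s\<in>{0..1}. \<exists>u\<in>H. y = s *\<^sub>R a + (1-s) *\<^sub>R u}"
  define S where "S = ({0..1::real} \<times> H) \<inter> {p. y = fst p *\<^sub>R a + (1 - fst p) *\<^sub>R snd p}"
  have FS: "F = fst ` S"
  proof
    show "F \<subseteq> fst ` S"
    proof
      fix s assume "s \<in> F"
      then obtain u where "s \<in> {0..1}" "u \<in> H" "y = s *\<^sub>R a + (1 - s) *\<^sub>R u"
        unfolding F_def by blast
      then show "s \<in> fst ` S" unfolding S_def by (intro image_eqI[of _ _ "(s,u)"]) auto
    qed
    show "fst ` S \<subseteq> F" unfolding F_def S_def by auto
  qed
  have cl: "closed {p::real \<times> 'a. y = fst p *\<^sub>R a + (1 - fst p) *\<^sub>R snd p}"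
    by (rule closed_Collect_eq) (intro continuous_intros)+
  have cS: "compact S" unfolding S_def
    by (rule compact_Int_closed[OF compact_Times[OF compact_Icc H(1)] cl])
  have cF: "compact F" unfolding FS
    by (rule compact_continuous_image[OF continuous_on_fst[OF continuous_on_id] cS])
  have Fne: "F \<noteq> {}" using y unfolding F_def Kb_def by auto
  have IF: "Inf F \<in> F"
    by (intro closed_contains_Inf Fne bounded_imp_bdd_below compact_imp_bounded cF compact_imp_closed)
  then show "Inf {s\<in>{0..1}. \<exists>u\<in>H. y = s *\<^sub>R a + (1-s) *\<^sub>R u} \<in> {s\<in>{0..1}. \<exists>u\<in>H. y = s *\<^sub>R a + (1-s) *\<^sub>R u}"
    unfolding F_def .
  assume b: "0 \<le> b" "b \<le> 1"
  have bddF: "bdd_below F" unfolding F_def by (intro bdd_belowI[of _ 0]) auto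
  show "Inf {s\<in>{0..1}. \<exists>u\<in>H. y = s *\<^sub>R a + (1-s) *\<^sub>R u} \<le> b \<longleftrightarrow> y \<in> Kb b a H"
    unfolding F_def[symmetric]
  proof
    assume "Inf F \<le> b"
    with IF show "y \<in> Kb b a H" unfolding F_def Kb_def by auto
  next
    assume "y \<in> Kb b a H"
    then obtain s u where su: "s \<in> {0..b}" "u \<in> H" "y = s *\<^sub>R a + (1 - s) *\<^sub>R u"
      unfolding Kb_def by auto
    then have "s \<in> F" unfolding F_def using b by auto
    then have "Inf F \<le> s" using bddF by (rule cInf_lower)
    then show "Inf F \<le> b" using su by auto
  qed
qed

lemma in_Kb_iff:
  fixes H :: "'a::real_normed_vector set"
  assumes H: "compact H" "H \<noteq> {}" and b: "0 \<le> b"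
  shows "y \<in> Kb b a H \<longleftrightarrow>
    (INF q\<in>{0..b}\<inter>\<rat>. Inf ((\<lambda>u. norm ((y - q *\<^sub>R a) - (1 - q) *\<^sub>R u)) ` H)) = 0"
proof -
  have ne: "Kb b a H \<noteq> {}" using H b unfolding Kb_def by auto
  have "y \<in> Kb b a H \<longleftrightarrow> infdist y (Kb b a H) = 0"
    by (intro in_closed_iff_infdist_zero compact_imp_closed Kb_compact H ne)
  also have "infdist y (Kb b a H) = Inf ((\<lambda>w. norm (y - 1 *\<^sub>R w)) ` Kb b a H)"
    using ne by (simp add: infdist_def dist_norm)
  also have "\<dots> = (INF q\<in>{0..b}\<inter>\<rat>. Inf ((\<lambda>u. norm ((y - (1*q) *\<^sub>R a) - (1*(1-q)) *\<^sub>R u)) ` H))"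
    by (rule inf_Kb[OF H(2) b])
  finally show ?thesis by simp
qed

definition gramOK :: "'b measure \<Rightarrow> (nat \<Rightarrow> 'b \<Rightarrow> 'a::real_inner) \<Rightarrow> ('b \<Rightarrow> 'a) \<Rightarrow> bool" where
  "gramOK M v y \<longleftrightarrow> (\<lambda>t. y t \<bullet> y t) \<in> borel_measurable M \<and> (\<forall>i. (\<lambda>t. y t \<bullet> v i t) \<in> borel_measurable M)"

lemma gram_v:
  assumes G: "\<And>i j. (\<lambda>t. v i t \<bullet> v j t) \<in> borel_measurable M"
  shows "gramOK M v (v j)"
  unfolding gramOK_def using G by auto

lemma gram_diff:
  assumes G: "\<And>i j. (\<lambda>t. v i t \<bullet> v j t) \<in> borel_measurable M"
    and y: "gramOK M v y" and c[measurable]: "c \<in> borel_measurable M"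
  shows "gramOK M v (\<lambda>t. y t - c t *\<^sub>R v j t)"
proof -
  have [measurable]: "(\<lambda>t. y t \<bullet> y t) \<in> borel_measurable M" "\<And>i. (\<lambda>t. y t \<bullet> v i t) \<in> borel_measurable M"
    using y unfolding gramOK_def by auto
  have [measurable]: "\<And>i j. (\<lambda>t. v i t \<bullet> v j t) \<in> borel_measurable M" by (rule G)
  have e1: "(\<lambda>t. (y t - c t *\<^sub>R v j t) \<bullet> (y t - c t *\<^sub>R v j t)) =
     (\<lambda>t. y t \<bullet> y t - 2 * c t * (y t \<bullet> v j t) + c t * c t * (v j t \<bullet> v j t))"
    by (auto simp: inner_diff_left inner_diff_right inner_commute[of "v j _" "y _"] algebra_simps)
  have e2: "(\<lambda>t. (y t - c t *\<^sub>R v j t) \<bullet> v i t) = (\<lambda>t. y t \<bullet> v i t - c t * (v j t \<bullet> v i t))" for i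
    by (auto simp: inner_diff_left)
  show ?thesis unfolding gramOK_def e1 e2 by measurable
qed

lemma gram_scale:
  assumes y: "gramOK M v y" and c[measurable]: "c \<in> borel_measurable M"
  shows "gramOK M v (\<lambda>t. c t *\<^sub>R y t)"
proof -
  have [measurable]: "(\<lambda>t. y t \<bullet> y t) \<in> borel_measurable M" "\<And>i. (\<lambda>t. y t \<bullet> v i t) \<in> borel_measurable M"
    using y unfolding gramOK_def by auto
  have e1: "(\<lambda>t. (c t *\<^sub>R y t) \<bullet> (c t *\<^sub>R y t)) = (\<lambda>t. c t * c t * (y t \<bullet> y t))" by auto
  have e2: "(\<lambda>t. (c t *\<^sub>R y t) \<bullet> v i t) = (\<lambda>t. c t * (y t \<bullet> v i t))" for i by auto
  show ?thesis unfolding gramOK_def e1 e2 by measurable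
qed

lemma gram_if:
  assumes y: "gramOK M v y" and z: "gramOK M v z" and P[measurable]: "Measurable.pred M P"
  shows "gramOK M v (\<lambda>t. if P t then y t else z t)"
proof -
  have [measurable]: "(\<lambda>t. y t \<bullet> y t) \<in> borel_measurable M" "\<And>i. (\<lambda>t. y t \<bullet> v i t) \<in> borel_measurable M"
    using y unfolding gramOK_def by auto
  have [measurable]: "(\<lambda>t. z t \<bullet> z t) \<in> borel_measurable M" "\<And>i. (\<lambda>t. z t \<bullet> v i t) \<in> borel_measurable M"
    using z unfolding gramOK_def by auto
  have e1: "(\<lambda>t. (if P t then y t else z t) \<bullet> (if P t then y t else z t)) = (\<lambda>t. if P t then y t \<bullet> y t else z t \<bullet> z t)" by auto
  have e2: "(\<lambda>t. (if P t then y t else z t) \<bullet> v i t) = (\<lambda>t. if P t then y t \<bullet> v i t else z t \<bullet> v i t)" for i by auto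
  show ?thesis unfolding gramOK_def e1 e2 by measurable
qed

lemma gram_norm:
  assumes G: "\<And>i j. (\<lambda>t. v i t \<bullet> v j t) \<in> borel_measurable M"
    and z: "gramOK M v z"
  shows "(\<lambda>t. norm (z t - r *\<^sub>R v j t)) \<in> borel_measurable M"
proof -
  have "gramOK M v (\<lambda>t. z t - (\<lambda>_. r) t *\<^sub>R v j t)" by (rule gram_diff[OF G z]) simp
  then have [measurable]: "(\<lambda>t. (z t - r *\<^sub>R v j t) \<bullet> (z t - r *\<^sub>R v j t)) \<in> borel_measurable M"
    unfolding gramOK_def by simp
  show ?thesis unfolding norm_eq_sqrt_inner by measurable
qed

lemma F_meas:
  fixes v :: "nat \<Rightarrow> 'b \<Rightarrow> 'a::real_inner" and z :: "'b \<Rightarrow> 'a" and r :: real and k :: nat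
  assumes G: "\<And>i j. (\<lambda>t. v i t \<bullet> v j t) \<in> borel_measurable M"
  shows "1 \<le> k \<Longrightarrow> gramOK M v z \<Longrightarrow>
    (\<lambda>t. Inf ((\<lambda>u. norm (z t - r *\<^sub>R u)) ` (convex hull ((\<lambda>i. v i t) ` {1..k})))) \<in> borel_measurable M"
proof (induction k arbitrary: z r rule: nat_induct_at_least)
  case base
  then show ?case using gram_norm[OF G, where z=z and r=r and j=1] by simp
next
  case (Suc k)
  have ins: "(\<lambda>i. v i t) ` {1..Suc k} = insert (v (Suc k) t) ((\<lambda>i. v i t) ` {1..k})" for t
    by (simp add: atLeastAtMostSuc_conv)
  have ne: "(\<lambda>i. v i t) ` {1..k} \<noteq> {}" for t using Suc.hyps by auto
  have eq: "Inf ((\<lambda>u. norm (z t - r *\<^sub>R u)) ` (convex hull ((\<lambda>i. v i t) ` {1..Suc k}))) =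
     (INF q\<in>{0..1}\<inter>\<rat>. Inf ((\<lambda>u. norm ((z t - (r*q) *\<^sub>R v (Suc k) t) - (r*(1-q)) *\<^sub>R u)) ` (convex hull ((\<lambda>i. v i t) ` {1..k}))))" for t
    unfolding ins hull_insert_Kb[OF ne] by (rule inf_Kb) (use ne in auto)
  have cnt: "countable ({0..1::real}\<inter>\<rat>)" by (rule countable_subset[OF _ countable_rat]) auto
  have m: "(\<lambda>t. Inf ((\<lambda>u. norm ((z t - (r*q) *\<^sub>R v (Suc k) t) - (r*(1-q)) *\<^sub>R u)) ` (convex hull ((\<lambda>i. v i t) ` {1..k})))) \<in> borel_measurable M" for q
  proof -
    have g: "gramOK M v (\<lambda>t. z t - (r*q) *\<^sub>R v (Suc k) t)"
      using gram_diff[OF G Suc.prems, of "\<lambda>_. r*q" "Suc k"] by simp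
    show ?thesis by (rule Suc.IH[OF g])
  qed
  show ?case unfolding eq by (rule borel_measurable_cINF_real[OF cnt m])
qed

lemma sel:
  fixes v :: "nat \<Rightarrow> 'b \<Rightarrow> 'a::real_inner" and y :: "'b \<Rightarrow> 'a" and k :: nat
  assumes G: "\<And>i j. (\<lambda>t. v i t \<bullet> v j t) \<in> borel_measurable M"
  shows "1 \<le> k \<Longrightarrow> gramOK M v y \<Longrightarrow> (\<forall>t\<in>space M. y t \<in> convex hull ((\<lambda>i. v i t) ` {1..k})) \<Longrightarrow>
    \<exists>\<theta>. (\<forall>i. (\<lambda>t. \<theta> t i) \<in> borel_measurable M) \<and>
      (\<forall>t\<in>space M. (\<forall>i\<in>{1..k}. 0 \<le> \<theta> t i) \<and> (\<Sum>i=1..k. \<theta> t i) = 1 \<and> y t = (\<Sum>i=1..k. \<theta> t i *\<^sub>R v i t))"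
proof (induction k arbitrary: y rule: nat_induct_at_least)
  case base
  show ?case
    by (rule exI[of _ "\<lambda>t i. 1"]) (use base.prems(2) in auto)
next
  case (Suc k)
  note yG = Suc.prems(1) and yin = Suc.prems(2)
  define H where "H t = convex hull ((\<lambda>i. v i t) ` {1..k})" for t
  define a where "a t = v (Suc k) t" for t
  have ne: "(\<lambda>i. v i t) ` {1..k} \<noteq> {}" for t using Suc.hyps by auto
  have Hc: "compact (H t)" for t unfolding H_def by (intro finite_imp_compact_convex_hull) auto
  have Hne: "H t \<noteq> {}" for t unfolding H_def using ne by simp
  have ins: "(\<lambda>i. v i t) ` {1..Suc k} = insert (v (Suc k) t) ((\<lambda>i. v i t) ` {1..k})" for t
    by (simp add: atLeastAtMostSuc_conv)
  have yK: "y t \<in> Kb 1 (a t) (H t)" if "t \<in> space M" for t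
    using yin that unfolding H_def a_def hull_insert_Kb[OF ne, symmetric] ins by simp
  define Fe where "Fe t = {s\<in>{0..1}. \<exists>u\<in>H t. y t = s *\<^sub>R a t + (1-s) *\<^sub>R u}" for t
  define s where "s t = Inf (Fe t)" for t
  have sF: "s t \<in> Fe t" if "t\<in>space M" for t
    unfolding s_def Fe_def using feas_inf(1)[OF Hc Hne yK[OF that]] .
  have sle: "s t \<le> b \<longleftrightarrow> y t \<in> Kb b (a t) (H t)" if "t\<in>space M" "0 \<le> b" "b \<le> 1" for t b
    unfolding s_def Fe_def using feas_inf(2)[OF Hc Hne yK[OF that(1)] that(2,3)] .
  have s01: "0 \<le> s t \<and> s t \<le> 1" if "t \<in> space M" for t using sF[OF that] unfolding Fe_def by auto
  define D where "D b t = (INF q\<in>{0..b}\<inter>\<rat>. Inf ((\<lambda>u. norm ((y t - q *\<^sub>R a t) - (1 - q) *\<^sub>R u)) ` H t))" for b t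
  have Dm: "D b \<in> borel_measurable M" for b
  proof -
    have m: "(\<lambda>t. Inf ((\<lambda>u. norm ((y t - q *\<^sub>R a t) - (1 - q) *\<^sub>R u)) ` H t)) \<in> borel_measurable M" for q
    proof -
      have g: "gramOK M v (\<lambda>t. y t - q *\<^sub>R v (Suc k) t)"
        using gram_diff[OF G yG, of "\<lambda>_. q" "Suc k"] by simp
      show ?thesis using F_meas[OF G Suc.hyps g, of "1 - q"] unfolding H_def a_def .
    qed
    have cnt: "countable ({0..b}\<inter>\<rat>)" by (rule countable_subset[OF _ countable_rat]) auto
    show ?thesis unfolding D_def by (rule borel_measurable_cINF_real[OF cnt m])
  qed
  have sm[measurable]: "s \<in> borel_measurable M"
    unfolding borel_measurable_iff_le
  proof
    fix b :: real
    show "{t \<in> space M. s t \<le> b} \<in> sets M"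
    proof (cases "b < 0")
      case True
      then have e: "{t \<in> space M. s t \<le> b} = {}" using s01 by force
      show ?thesis unfolding e by (rule sets.empty_sets)
    next
      case False
      have iff: "s t \<le> b \<longleftrightarrow> D (min b 1) t = 0" if t: "t \<in> space M" for t
      proof -
        have "s t \<le> b \<longleftrightarrow> s t \<le> min b 1" using s01[OF t] by auto
        also have "\<dots> \<longleftrightarrow> y t \<in> Kb (min b 1) (a t) (H t)" using sle[OF t, of "min b 1"] False by simp
        also have "\<dots> \<longleftrightarrow> D (min b 1) t = 0"
          unfolding D_def using in_Kb_iff[OF Hc Hne, where b="min b 1" and y="y t" and a="a t"] False by simp
        finally show ?thesis .
      qed
      have "{t \<in> space M. s t \<le> b} = {t \<in> space M. D (min b 1) t = 0}" using iff by auto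
      also have [measurable]: "D (min b 1) \<in> borel_measurable M" by (rule Dm)
      have "{t \<in> space M. D (min b 1) t = 0} \<in> sets M" by measurable
      finally show ?thesis .
    qed
  qed
  define u where "u t = (if s t < 1 then (1 / (1 - s t)) *\<^sub>R (y t - s t *\<^sub>R v (Suc k) t) else v 1 t)" for t
  have ug: "gramOK M v u"
  proof -
    have c: "(\<lambda>t. 1 / (1 - s t)) \<in> borel_measurable M" by measurable
    have g1: "gramOK M v (\<lambda>t. (1 / (1 - s t)) *\<^sub>R (y t - s t *\<^sub>R v (Suc k) t))"
      using gram_scale[OF gram_diff[OF G yG sm, where j="Suc k"] c] by simp
    have P: "Measurable.pred M (\<lambda>t. s t < 1)" by measurable
    show ?thesis unfolding u_def using gram_if[OF g1 gram_v[OF G, where j=1] P] by simp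
  qed
  have yu: "y t = s t *\<^sub>R v (Suc k) t + (1 - s t) *\<^sub>R u t" and uH: "u t \<in> H t" if t: "t \<in> space M" for t
  proof -
    from sF[OF t] obtain w where w: "w \<in> H t" "y t = s t *\<^sub>R a t + (1 - s t) *\<^sub>R w"
      unfolding Fe_def by auto
    have "y t = s t *\<^sub>R v (Suc k) t + (1 - s t) *\<^sub>R u t \<and> u t \<in> H t"
    proof (cases "s t < 1")
      case True
      have e: "y t - s t *\<^sub>R v (Suc k) t = (1 - s t) *\<^sub>R w" using w(2) unfolding a_def by simp
      have "u t = w" using True unfolding u_def e by simp
      then show ?thesis using w e by simp
    next
      case False
      then have s1: "s t = 1" using s01[OF t] by auto
      have "u t = v 1 t" using False unfolding u_def by simp
      moreover have "v 1 t \<in> H t" unfolding H_def using Suc.hyps by (intro hull_inc) auto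
      ultimately show ?thesis using w s1 unfolding a_def by simp
    qed
    then show "y t = s t *\<^sub>R v (Suc k) t + (1 - s t) *\<^sub>R u t" "u t \<in> H t" by auto
  qed
  obtain \<theta> where \<theta>m: "\<forall>i. (\<lambda>t. \<theta> t i) \<in> borel_measurable M"
    and \<theta>p: "\<forall>t\<in>space M. (\<forall>i\<in>{1..k}. 0 \<le> \<theta> t i) \<and> (\<Sum>i=1..k. \<theta> t i) = 1 \<and> u t = (\<Sum>i=1..k. \<theta> t i *\<^sub>R v i t)"
    using Suc.IH[OF ug] uH unfolding H_def by blast
  define \<theta>' where "\<theta>' t i = (if i = Suc k then s t else (1 - s t) * \<theta> t i)" for t i
  have sums: "{1..Suc k} = insert (Suc k) {1..k}" by (simp add: atLeastAtMostSuc_conv)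
  show ?case
  proof (rule exI[of _ \<theta>'], rule conjI)
    show "\<forall>i. (\<lambda>t. \<theta>' t i) \<in> borel_measurable M"
    proof
      fix i
      show "(\<lambda>t. \<theta>' t i) \<in> borel_measurable M"
      proof (cases "i = Suc k")
        case True
        then show ?thesis unfolding \<theta>'_def using sm by simp
      next
        case False
        have [measurable]: "(\<lambda>t. \<theta> t i) \<in> borel_measurable M" using \<theta>m by simp
        have "(\<lambda>t. \<theta>' t i) = (\<lambda>t. (1 - s t) * \<theta> t i)" using False by (simp add: \<theta>'_def)
        then show ?thesis by simp
      qed
    qed
    show "\<forall>t\<in>space M. (\<forall>i\<in>{1..Suc k}. 0 \<le> \<theta>' t i) \<and> (\<Sum>i=1..Suc k. \<theta>' t i) = 1 \<and>
        y t = (\<Sum>i=1..Suc k. \<theta>' t i *\<^sub>R v i t)"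
    proof
      fix t assume t: "t \<in> space M"
      have th: "\<forall>i\<in>{1..k}. 0 \<le> \<theta> t i" "(\<Sum>i=1..k. \<theta> t i) = 1" "u t = (\<Sum>i=1..k. \<theta> t i *\<^sub>R v i t)"
        using \<theta>p t by auto
      have c1: "(\<Sum>i=1..k. \<theta>' t i) = (\<Sum>i=1..k. (1 - s t) * \<theta> t i)"
        by (rule sum.cong) (auto simp: \<theta>'_def)
      have c2: "(\<Sum>i=1..k. \<theta>' t i *\<^sub>R v i t) = (\<Sum>i=1..k. (1 - s t) *\<^sub>R (\<theta> t i *\<^sub>R v i t))"
        by (rule sum.cong) (auto simp: \<theta>'_def)
      have "\<forall>i\<in>{1..Suc k}. 0 \<le> \<theta>' t i" using s01[OF t] th(1) by (auto simp: \<theta>'_def le_Suc_eq)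
      moreover have "(\<Sum>i=1..Suc k. \<theta>' t i) = 1"
        unfolding sums using c1 th(2) by (simp add: \<theta>'_def sum_distrib_left[symmetric])
      moreover have "y t = (\<Sum>i=1..Suc k. \<theta>' t i *\<^sub>R v i t)"
        unfolding sums using c2 th(3) yu[OF t] by (simp add: \<theta>'_def scaleR_sum_right)
      ultimately show "(\<forall>i\<in>{1..Suc k}. 0 \<le> \<theta>' t i) \<and> (\<Sum>i=1..Suc k. \<theta>' t i) = 1 \<and>
        y t = (\<Sum>i=1..Suc k. \<theta>' t i *\<^sub>R v i t)" by blast
    qed
  qed
qed

lemma aux_scale:
  fixes a b d :: "'a::real_normed_vector" and N :: real
  assumes N: "N > 0"
  shows "(1 / norm (1 / N)) *\<^sub>R (a - (b + (1 / N) *\<^sub>R d)) = N *\<^sub>R (a - b) - d"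
proof -
  have n: "1 / norm (1 / N) = N" using N by simp
  have "N *\<^sub>R (a - (b + (1 / N) *\<^sub>R d)) = N *\<^sub>R (a - b) - (N * (1 / N)) *\<^sub>R d"
    by (simp add: scaleR_diff_right scaleR_add_right diff_diff_add)
  also have "N * (1 / N) = 1" using N by simp
  finally show ?thesis unfolding n by simp
qed

lemma deriv_seq:
  fixes f :: "real \<Rightarrow> 'a::real_normed_vector"
  assumes d: "(f has_vector_derivative f') (at t within {t0..})" and t: "t0 \<le> t"
  shows "(\<lambda>n. real (Suc n) *\<^sub>R (f (t + 1 / real (Suc n)) - f t)) \<longlonglongrightarrow> f'"
proof -
  have L: "((\<lambda>y. (1 / norm (y - t)) *\<^sub>R (f y - (f t + (y - t) *\<^sub>R f'))) \<longlongrightarrow> 0) (at t within {t0..})"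
    using d unfolding has_vector_derivative_def has_derivative_within by simp
  have sq: "(\<lambda>n. t + 1 / real (Suc n)) \<longlonglongrightarrow> t"
    using tendsto_add[OF tendsto_const[of t] LIMSEQ_inverse_real_of_nat] by (simp add: divide_inverse)
  have F: "filterlim (\<lambda>n. t + 1 / real (Suc n)) (at t within {t0..}) sequentially"
  proof -
    have "t + 1 / real (Suc n) \<in> {t0..} \<and> t + 1 / real (Suc n) \<noteq> t" for n
    proof -
      have p: "1 / real (Suc n) > 0" by simp
      have "t0 \<le> t + 1 / real (Suc n)" using t p by linarith
      moreover have "t + 1 / real (Suc n) \<noteq> t" using p by linarith
      ultimately show ?thesis by (simp only: atLeast_iff) blast
    qed
    then show ?thesis unfolding filterlim_at using sq by (auto intro: always_eventually)
  qed
  have lim: "(\<lambda>n. (1 / norm ((t + 1 / real (Suc n)) - t)) *\<^sub>R (f (t + 1 / real (Suc n)) - (f t + ((t + 1 / real (Suc n)) - t) *\<^sub>R f'))) \<longlonglongrightarrow> 0"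
    by (rule filterlim_compose[OF L F])
  have eq: "(1 / norm ((t + 1 / real (Suc n)) - t)) *\<^sub>R (f (t + 1 / real (Suc n)) - (f t + ((t + 1 / real (Suc n)) - t) *\<^sub>R f'))
      = real (Suc n) *\<^sub>R (f (t + 1 / real (Suc n)) - f t) - f'" for n
  proof -
    have c: "(t + 1 / real (Suc n)) - t = 1 / real (Suc n)" by simp
    show ?thesis unfolding c by (rule aux_scale) simp
  qed
  show ?thesis by (rule LIM_zero_cancel) (use lim in \<open>unfold eq\<close>)
qed

lemma ae_meas:
  fixes f g :: "real \<Rightarrow> real"
  assumes f: "f \<in> borel_measurable (lebesgue_on {t0..})"
    and ae: "AE t in lebesgue. t > t0 \<longrightarrow> g t = f t"
  shows "g \<in> borel_measurable (lebesgue_on {t0..})"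
proof -
  have S: "{t0..} \<inter> space lebesgue \<in> sets lebesgue" by simp
  have f': "(\<lambda>t. indicator {t0..} t *\<^sub>R f t) \<in> borel_measurable lebesgue"
    using f unfolding borel_measurable_restrict_space_iff[OF S] .
  have "AE t in lebesgue. t \<noteq> t0"
    by (rule AE_completion) (rule AE_lborel_singleton)
  with ae have "AE t in lebesgue. indicator {t0..} t *\<^sub>R f t = indicator {t0..} t *\<^sub>R g t"
    by eventually_elim (auto simp: indicator_def)
  from borel_measurable_AE[OF f' this] show ?thesis
    unfolding borel_measurable_restrict_space_iff[OF S] .
qed

lemma proj_in:
  fixes K :: "'a::real_inner set"
  assumes "compact K" "K \<noteq> {}"
  shows "proj K y \<in> K"
proof -
  have "continuous_on K (\<lambda>w. (norm (w - y))\<^sup>2)" by (intro continuous_intros)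
  then obtain w where "w \<in> K" "\<forall>z\<in>K. (norm (w - y))\<^sup>2 \<le> (norm (z - y))\<^sup>2"
    using continuous_attains_inf[OF assms] by blast
  then have "\<exists>w. w \<in> K \<and> (\<forall>z\<in>K. (norm (w - y))\<^sup>2 \<le> (norm (z - y))\<^sup>2)" by blast
  then show ?thesis unfolding proj_def by (rule someI2_ex) blast
qed

theorem lemma4p3:
  fixes f :: "nat \<Rightarrow> 'a::{real_inner, complete_space} \<Rightarrow> real"
    and g :: "nat \<Rightarrow> 'a \<Rightarrow> 'a"
    and m :: nat and \<alpha> t0 :: real and x0 v0 :: 'a
    and x x' x'' :: "real \<Rightarrow> 'a"
  assumes m: "m \<ge> 1"
    and convex: "\<And>i. i \<in> {1..m} \<Longrightarrow> convex_on UNIV (f i)"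
    and grad: "\<And>i y. i \<in> {1..m} \<Longrightarrow> (f i has_derivative (\<lambda>h. g i y \<bullet> h)) (at y)"
    and grad_cont: "\<And>i. i \<in> {1..m} \<Longrightarrow> continuous_on UNIV (g i)"
    and \<alpha>: "\<alpha> > 0" and t0: "t0 > 0"
    and x_C1: "\<And>t. t \<ge> t0 \<Longrightarrow> (x has_vector_derivative x' t) (at t within {t0..})"
    and x'_cont: "continuous_on {t0..} x'"
    and x''_meas: "x'' \<in> borel_measurable (restrict_space lebesgue {t0..})"
    and x''_int: "\<And>t. t \<ge> t0 \<Longrightarrow> (x'' has_integral (x' t - x' t0)) {t0..t}"
    and x''_abs: "\<And>t. t \<ge> t0 \<Longrightarrow> (\<lambda>s. norm (x'' s)) integrable_on {t0..t}"
    and x''_deriv: "AE t in lebesgue. t \<ge> t0 \<longrightarrow> (x' has_vector_derivative x'' t) (at t within {t0..})"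
    and eq: "AE t in lebesgue. t > t0 \<longrightarrow>
               (\<alpha> / t) *\<^sub>R x' t + proj ((\<lambda>c. c + x'' t) ` Cset m g (x t)) 0 = 0"
    and init: "x t0 = x0" "x' t0 = v0"
  shows "\<exists>\<theta> :: real \<Rightarrow> nat \<Rightarrow> real.
           (\<forall>i\<in>{1..m}. (\<lambda>t. \<theta> t i) \<in> borel_measurable (restrict_space lebesgue {t0..})) \<and>
           (\<forall>t\<ge>t0. \<theta> t \<in> prob_simplex m \<and>
              proj ((\<lambda>c. c + x'' t) ` Cset m g (x t)) 0
                = (\<Sum>i=1..m. \<theta> t i *\<^sub>R g i (x t)) + x'' t)"
proof -
  define M where "M = restrict_space (lebesgue :: real measure) {t0..}"
  define v where "v i t = (if i \<in> {1..m} then g i (x t) else 0)" for i t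
  have xc: "continuous_on {t0..} x"
    by (rule continuous_on_vector_derivative) (use x_C1 in auto)
  have vc: "continuous_on {t0..} (v i)" for i
  proof (cases "i \<in> {1..m}")
    case True
    have "continuous_on {t0..} (\<lambda>t. g i (x t))"
      by (rule continuous_on_compose2[OF grad_cont[OF True] xc]) auto
    then show ?thesis unfolding v_def using True by simp
  next
    case False
    then have "v i = (\<lambda>t. 0)" unfolding v_def by (intro ext) auto
    then show ?thesis by simp
  qed
  have Sl: "{t0..} \<in> sets (lebesgue :: real measure)" by simp
  have contmeas: "h \<in> borel_measurable M" if "continuous_on {t0..} h" for h :: "real \<Rightarrow> real"
    using continuous_imp_measurable_on_sets_lebesgue[OF that Sl] unfolding M_def .
  have G: "\<And>i j. (\<lambda>t. v i t \<bullet> v j t) \<in> borel_measurable M"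
    by (intro contmeas continuous_intros vc)
  define w where "w t = proj ((\<lambda>c. c + x'' t) ` Cset m g (x t)) 0 - x'' t" for t
  have Cs: "Cset m g (x t) = convex hull ((\<lambda>i. v i t) ` {1..m})" for t
    unfolding Cset_def v_def by (rule arg_cong[where f="\<lambda>S. convex hull S"]) auto
  have win: "w t \<in> convex hull ((\<lambda>i. v i t) ` {1..m})" for t
  proof -
    let ?C = "convex hull ((\<lambda>i. v i t) ` {1..m})"
    have cC: "compact ?C" by (intro finite_imp_compact_convex_hull) auto
    have neC: "?C \<noteq> {}" using m by auto
    have cK: "compact ((\<lambda>c. c + x'' t) ` ?C)"
      by (intro compact_continuous_image continuous_intros cC)
    have "proj ((\<lambda>c. c + x'' t) ` ?C) 0 \<in> (\<lambda>c. c + x'' t) ` ?C"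
      by (rule proj_in[OF cK]) (use neC in auto)
    then show ?thesis unfolding w_def Cs by auto
  qed
  define \<psi> where "\<psi> n t = (- (\<alpha> / t)) *\<^sub>R x' t - real (Suc n) *\<^sub>R (x' (t + 1 / real (Suc n)) - x' t)" for n t
  have \<psi>c: "continuous_on {t0..} (\<psi> n)" for n
  proof -
    have a: "continuous_on {t0..} (\<lambda>t. \<alpha> / t)" using t0 by (intro continuous_intros) auto
    have sub: "(\<lambda>t. t + 1 / real (Suc n)) ` {t0..} \<subseteq> {t0..}"
    proof
      fix y assume "y \<in> (\<lambda>t. t + 1 / real (Suc n)) ` {t0..}"
      then obtain t where t: "t0 \<le> t" "y = t + 1 / real (Suc n)" by auto
      have p: "1 / real (Suc n) > 0" by simp
      have "t0 \<le> y" using t p by linarith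
      then show "y \<in> {t0..}" by simp
    qed
    have b: "continuous_on {t0..} (\<lambda>t. x' (t + 1 / real (Suc n)))"
      by (rule continuous_on_compose2[OF x'_cont _ sub]) (intro continuous_intros)
    show ?thesis unfolding \<psi>_def by (intro continuous_intros a b x'_cont)
  qed
  have AEg: "AE t in lebesgue. t > t0 \<longrightarrow> (\<lambda>n. \<psi> n t) \<longlonglongrightarrow> w t"
    using eq x''_deriv
  proof eventually_elim
    case (elim t)
    show ?case
    proof
      assume t: "t > t0"
      have d: "(x' has_vector_derivative x'' t) (at t within {t0..})" using elim(2) t by auto
      have pe: "proj ((\<lambda>c. c + x'' t) ` Cset m g (x t)) 0 = - ((\<alpha> / t) *\<^sub>R x' t)"
        using elim(1) t by (metis add.commute eq_neg_iff_add_eq_0)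
      have "w t = (- (\<alpha> / t)) *\<^sub>R x' t - x'' t" unfolding w_def pe by simp
      moreover have "(\<lambda>n. \<psi> n t) \<longlonglongrightarrow> (- (\<alpha> / t)) *\<^sub>R x' t - x'' t"
        unfolding \<psi>_def by (intro tendsto_diff tendsto_const deriv_seq[OF d]) (use t in auto)
      ultimately show "(\<lambda>n. \<psi> n t) \<longlonglongrightarrow> w t" by simp
    qed
  qed
  have m1: "(\<lambda>t. w t \<bullet> w t) \<in> borel_measurable M"
  proof -
    have "(\<lambda>t. lim (\<lambda>n. \<psi> n t \<bullet> \<psi> n t)) \<in> borel_measurable M"
      by (rule borel_measurable_lim_metric[of "\<lambda>n t. \<psi> n t \<bullet> \<psi> n t"]) (intro contmeas continuous_intros \<psi>c)
    moreover have "AE t in lebesgue. t > t0 \<longrightarrow> w t \<bullet> w t = lim (\<lambda>n. \<psi> n t \<bullet> \<psi> n t)"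
      using AEg by eventually_elim (auto intro!: limI[symmetric] tendsto_inner)
    ultimately show ?thesis unfolding M_def by (rule ae_meas)
  qed
  have m2: "(\<lambda>t. w t \<bullet> v i t) \<in> borel_measurable M" for i
  proof -
    have "(\<lambda>t. lim (\<lambda>n. \<psi> n t \<bullet> v i t)) \<in> borel_measurable M"
      by (rule borel_measurable_lim_metric[of "\<lambda>n t. \<psi> n t \<bullet> v i t"]) (intro contmeas continuous_intros \<psi>c vc)
    moreover have "AE t in lebesgue. t > t0 \<longrightarrow> w t \<bullet> v i t = lim (\<lambda>n. \<psi> n t \<bullet> v i t)"
      using AEg by eventually_elim (auto intro!: limI[symmetric] tendsto_inner)
    ultimately show ?thesis unfolding M_def by (rule ae_meas)
  qed
  have wG: "gramOK M v w" unfolding gramOK_def using m1 m2 by auto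
  obtain \<theta> where \<theta>m: "\<forall>i. (\<lambda>t. \<theta> t i) \<in> borel_measurable M"
    and \<theta>p: "\<forall>t\<in>space M. (\<forall>i\<in>{1..m}. 0 \<le> \<theta> t i) \<and> (\<Sum>i=1..m. \<theta> t i) = 1 \<and> w t = (\<Sum>i=1..m. \<theta> t i *\<^sub>R v i t)"
    using sel[OF G m wG] win by blast
  have spM: "space M = {t0..}" unfolding M_def by (simp add: space_restrict_space)
  have "\<forall>i\<in>{1..m}. (\<lambda>t. \<theta> t i) \<in> borel_measurable (restrict_space lebesgue {t0..})"
    using \<theta>m unfolding M_def by auto
  moreover have "\<forall>t\<ge>t0. \<theta> t \<in> prob_simplex m \<and>
              proj ((\<lambda>c. c + x'' t) ` Cset m g (x t)) 0
                = (\<Sum>i=1..m. \<theta> t i *\<^sub>R g i (x t)) + x'' t"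
  proof (intro allI impI)
    fix t assume t: "t0 \<le> t"
    then have tM: "t \<in> space M" using spM by auto
    have p: "\<forall>i\<in>{1..m}. 0 \<le> \<theta> t i" "(\<Sum>i=1..m. \<theta> t i) = 1" "w t = (\<Sum>i=1..m. \<theta> t i *\<^sub>R v i t)"
      using \<theta>p tM by auto
    have s: "(\<Sum>i=1..m. \<theta> t i *\<^sub>R v i t) = (\<Sum>i=1..m. \<theta> t i *\<^sub>R g i (x t))"
      by (rule sum.cong) (auto simp: v_def)
    show "\<theta> t \<in> prob_simplex m \<and> proj ((\<lambda>c. c + x'' t) ` Cset m g (x t)) 0
                = (\<Sum>i=1..m. \<theta> t i *\<^sub>R g i (x t)) + x'' t"
      using p s unfolding prob_simplex_def w_def by (simp add: diff_eq_eq)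
  qed
  ultimately show ?thesis by blast
qed

end
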